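(* Let $N\ge 2$, $R>0$, $p>0$ and consider $$\Delta u=v^p,\qquad \Delta v=e^{|\nabla u|}\qquad\text{in } B_R.$$ Then every positive radial solution $(u,v)$ of this system is either bounded (both $u$ and $v$ bounded in $B_R$) or satisfies: $u$ is bounded in $B_R$ and $\lim_{|x|\nearrow R}v(x)=\infty$.
   Context: $B_R\subset\mathbb{R}^N$ is the open ball of radius $R$ centred at the origin. A positive radial solution is a pair of radially symmetric functions $u,v\in C^2(B_R)$, positive in $B_R$, satisfying the equations pointwise. *)

theory Defs
  imports "HOL-Analysis.Analysis"
begin

definition partial :: "'n::finite \<Rightarrow> (real^'n \<Rightarrow> real) \<Rightarrow> real^'n \<Rightarrow> real" where
  "partial i f x = deriv (\<lambda>t. f (x + t *\<^sub>R axis i 1)) 0"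

definition grad :: "(real^'n::finite \<Rightarrow> real) \<Rightarrow> real^'n \<Rightarrow> real^'n" where
  "grad f x = (\<chi> i. partial i f x)"

definition laplacian :: "(real^'n::finite \<Rightarrow> real) \<Rightarrow> real^'n \<Rightarrow> real" where
  "laplacian f x = (\<Sum>i\<in>UNIV. partial i (partial i f) x)"

definition C2_on :: "(real^'n::finite) set \<Rightarrow> (real^'n \<Rightarrow> real) \<Rightarrow> bool" where
  "C2_on S f \<longleftrightarrow> (\<exists>Df D2f.
     (\<forall>x\<in>S. (f has_derivative (\<lambda>h. Df x \<bullet> h)) (at x)) \<and>
     (\<forall>x\<in>S. (Df has_derivative (\<lambda>h. D2f x *v h)) (at x)) \<and>
     continuous_on S (D2f :: real^'n \<Rightarrow> real^'n^'n))"

definition radial_on :: "(real^'n::finite) set \<Rightarrow> (real^'n \<Rightarrow> real) \<Rightarrow> bool" where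
  "radial_on S f \<longleftrightarrow> (\<forall>x\<in>S. \<forall>y\<in>S. norm x = norm y \<longrightarrow> f x = f y)"

end

theory Submission
  imports Defs
begin

lemma line_deriv:
  fixes f :: "real^'n::finite \<Rightarrow> real"
  assumes "(f has_derivative (\<lambda>h. D \<bullet> h)) (at (x + t *\<^sub>R e))"
  shows "((\<lambda>s. f (x + s *\<^sub>R e)) has_real_derivative D \<bullet> e) (at t)"
proof -
  have l: "((\<lambda>s. x + s *\<^sub>R e) has_derivative (\<lambda>s. s *\<^sub>R e)) (at t)"
    by (auto intro!: derivative_eq_intros)
  have "((f \<circ> (\<lambda>s. x + s *\<^sub>R e)) has_derivative ((\<lambda>h. D \<bullet> h) \<circ> (\<lambda>s. s *\<^sub>R e))) (at t)"
    by (rule diff_chain_at[OF l]) (use assms in simp)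
  moreover have "(\<lambda>s. s * (D \<bullet> e)) = (*) (D \<bullet> e)" by (auto simp: fun_eq_iff)
  ultimately show ?thesis
    by (simp add: has_field_derivative_def o_def)
qed

lemma line_deriv_vec:
  fixes g :: "real^'n::finite \<Rightarrow> real^'n"
  assumes "(g has_derivative L) (at (x + t *\<^sub>R e))"
  shows "((\<lambda>s. g (x + s *\<^sub>R e) $ j) has_real_derivative (L e) $ j) (at t)"
proof -
  have l: "((\<lambda>s. x + s *\<^sub>R e) has_derivative (\<lambda>s. s *\<^sub>R e)) (at t)"
    by (auto intro!: derivative_eq_intros)
  have "((g \<circ> (\<lambda>s. x + s *\<^sub>R e)) has_derivative (L \<circ> (\<lambda>s. s *\<^sub>R e))) (at t)"
    by (rule diff_chain_at[OF l]) (use assms in simp)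
  then have "((\<lambda>y. y $ j) \<circ> (g \<circ> (\<lambda>s. x + s *\<^sub>R e)) has_derivative (\<lambda>y. y $ j) \<circ> (L \<circ> (\<lambda>s. s *\<^sub>R e))) (at t)"
    by (rule diff_chain_at) (rule bounded_linear_imp_has_derivative[OF bounded_linear_vec_nth])
  moreover have "bounded_linear L" using assms has_derivative_bounded_linear by blast
  then have "(\<lambda>s. L (s *\<^sub>R e) $ j) = (*) (L e $ j)"
    by (auto simp: fun_eq_iff linear_simps)
  ultimately show ?thesis
    by (simp add: has_field_derivative_def o_def)
qed

lemma partial_eq:
  fixes f :: "real^'n::finite \<Rightarrow> real"
  assumes "(f has_derivative (\<lambda>h. D \<bullet> h)) (at x)"
  shows "partial i f x = D $ i"
proof -
  have "((\<lambda>s. f (x + s *\<^sub>R axis i 1)) has_real_derivative D \<bullet> axis i 1) (at 0)"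
    by (rule line_deriv) (use assms in simp)
  then show ?thesis unfolding partial_def
    by (simp add: DERIV_imp_deriv cart_eq_inner_axis)
qed


lemma partial2_eq:
  fixes f :: "real^'n::finite \<Rightarrow> real"
  assumes Df: "\<forall>x\<in>ball 0 R. (f has_derivative (\<lambda>h. Df x \<bullet> h)) (at x)"
    and D2f: "\<forall>x\<in>ball 0 R. (Df has_derivative (\<lambda>h. D2f x *v h)) (at x)"
    and x: "x \<in> ball 0 R"
  shows "partial j (partial j f) x = (D2f x *v axis j 1) $ j"
proof -
  let ?S = "{s::real. x + s *\<^sub>R axis j 1 \<in> ball 0 R}"
  have op: "open ?S"
    by (simp add: mem_ball, intro open_Collect_less continuous_intros)
  have "((\<lambda>s. Df (x + s *\<^sub>R axis j 1) $ j) has_real_derivative ((\<lambda>h. D2f x *v h) (axis j 1)) $ j) (at 0)"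
    by (rule line_deriv_vec) (use D2f x in simp)
  then have "((\<lambda>s. partial j f (x + s *\<^sub>R axis j 1)) has_real_derivative (D2f x *v axis j 1) $ j) (at 0)"
  proof (rule has_field_derivative_transform_within_open[OF _ op])
    show "0 \<in> ?S" using x by simp
    fix s assume "s \<in> ?S"
    then show "Df (x + s *\<^sub>R axis j 1) $ j = partial j f (x + s *\<^sub>R axis j 1)"
    proof -
      have xb: "x + s *\<^sub>R axis j 1 \<in> ball 0 R" using \<open>s \<in> ?S\<close> by simp
      show ?thesis by (simp add: partial_eq[OF Df[rule_format, OF xb]])
    qed
  qed
  then show ?thesis unfolding partial_def[of j "partial j f"]
    by (simp add: DERIV_imp_deriv)
qed

lemma radial_facts:
  fixes f :: "real^'n::finite \<Rightarrow> real"
  assumes R: "R > 0" and C2: "C2_on (ball 0 R) f" and rad: "radial_on (ball 0 R) f"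
  shows "\<exists>\<phi> a a2. (\<forall>x\<in>ball 0 R. f x = \<phi> (norm x)) \<and>
     (\<forall>t. \<bar>t\<bar> < R \<longrightarrow> (\<phi> has_real_derivative a t) (at t)) \<and>
     (\<forall>t. \<bar>t\<bar> < R \<longrightarrow> (a has_real_derivative a2 t) (at t)) \<and>
     (\<forall>t. 0 < t \<and> t < R \<longrightarrow> laplacian f (t *\<^sub>R axis i0 1) = a2 t + (real CARD('n) - 1) * a t / t) \<and>
     (\<forall>t. 0 < t \<and> t < R \<longrightarrow> norm (grad f (t *\<^sub>R axis i0 1)) = \<bar>a t\<bar>)"
proof -
  obtain Df D2f where Df: "\<forall>x\<in>ball 0 R. (f has_derivative (\<lambda>h. Df x \<bullet> h)) (at x)"
    and D2f: "\<forall>x\<in>ball 0 R. (Df has_derivative (\<lambda>h. D2f x *v h)) (at x)"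
    using C2 unfolding C2_on_def by blast
  define e :: "real^'n" where "e = axis i0 1"
  define \<phi> where "\<phi> = (\<lambda>t. f (t *\<^sub>R e))"
  define a where "a = (\<lambda>t. Df (t *\<^sub>R e) $ i0)"
  define a2 where "a2 = (\<lambda>t. (D2f (t *\<^sub>R e) *v e) $ i0)"
  have ne1[simp]: "norm e = 1" by (simp add: e_def)
  have enz[simp]: "e \<noteq> 0" by (metis ne1 norm_zero zero_neq_one)
  have ne: "norm (t *\<^sub>R e) = \<bar>t\<bar>" for t by (simp add: e_def)
  have inb: "\<bar>t\<bar> < R \<Longrightarrow> t *\<^sub>R e \<in> ball 0 R" for t by (simp add: e_def)
  have i: "\<forall>x\<in>ball 0 R. f x = \<phi> (norm x)"
  proof
    fix x :: "real^'n" assume x: "x \<in> ball 0 R"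
    have "norm x *\<^sub>R e \<in> ball 0 R" using x by (simp add: e_def)
    then show "f x = \<phi> (norm x)" using rad x unfolding radial_on_def \<phi>_def
      by (metis abs_norm_cancel ne)
  qed
  have ii: "\<forall>t. \<bar>t\<bar> < R \<longrightarrow> (\<phi> has_real_derivative a t) (at t)"
  proof (intro allI impI)
    fix t :: real assume t: "\<bar>t\<bar> < R"
    have "((\<lambda>s. f (0 + s *\<^sub>R e)) has_real_derivative Df (t *\<^sub>R e) \<bullet> e) (at t)"
      by (rule line_deriv) (use Df inb[OF t] in simp)
    then show "(\<phi> has_real_derivative a t) (at t)"
      by (simp add: \<phi>_def a_def e_def cart_eq_inner_axis)
  qed
  have iii: "\<forall>t. \<bar>t\<bar> < R \<longrightarrow> (a has_real_derivative a2 t) (at t)"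
  proof (intro allI impI)
    fix t :: real assume t: "\<bar>t\<bar> < R"
    have "((\<lambda>s. Df (0 + s *\<^sub>R e) $ i0) has_real_derivative ((\<lambda>h. D2f (t *\<^sub>R e) *v h) e) $ i0) (at t)"
      by (rule line_deriv_vec) (use D2f inb[OF t] in simp)
    then show "(a has_real_derivative a2 t) (at t)"
      by (simp add: a_def a2_def)
  qed
  have Dfy: "Df y $ j = a (norm y) * (y $ j) / norm y" if y: "y \<in> ball 0 R" "y \<noteq> 0" for y j
  proof -
    have ny: "\<bar>norm y\<bar> < R" using y by simp
    have "((\<phi> \<circ> norm) has_derivative ((*) (a (norm y))) \<circ> (\<lambda>h. h \<bullet> sgn y)) (at y)"
      by (rule diff_chain_at[OF has_derivative_norm[OF y(2)]])
        (use ii ny in \<open>simp add: has_field_derivative_def\<close>)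
    then have "(f has_derivative ((*) (a (norm y))) \<circ> (\<lambda>h. h \<bullet> sgn y)) (at y)"
      by (rule has_derivative_transform_within_open[OF _ open_ball y(1)]) (use i in simp)
    then have "(\<lambda>h. Df y \<bullet> h) = ((*) (a (norm y))) \<circ> (\<lambda>h. h \<bullet> sgn y)"
      using Df y(1) has_derivative_unique by blast
    then have "Df y \<bullet> axis j 1 = a (norm y) * (axis j 1 \<bullet> sgn y)"
      by (metis comp_apply)
    then show ?thesis
      by (simp add: cart_eq_inner_axis inner_commute sgn_div_norm divide_inverse mult.assoc)
  qed
  have iv: "\<forall>t. 0 < t \<and> t < R \<longrightarrow> norm (grad f (t *\<^sub>R axis i0 1)) = \<bar>a t\<bar>"
  proof (intro allI impI)
    fix t :: real assume t: "0 < t \<and> t < R"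
    have tb: "t *\<^sub>R e \<in> ball 0 R" using inb t by simp
    have "grad f (t *\<^sub>R e) = a t *\<^sub>R e"
    proof (simp add: grad_def vec_eq_iff, intro allI)
      fix j
      have "partial j f (t *\<^sub>R e) = Df (t *\<^sub>R e) $ j"
        using partial_eq Df tb by blast
      also have "\<dots> = a t * e $ j"
        using Dfy[OF tb] t by (simp add: e_def)
      finally show "partial j f (t *\<^sub>R e) = a t * e $ j" .
    qed
    then show "norm (grad f (t *\<^sub>R axis i0 1)) = \<bar>a t\<bar>"
      by (simp add: e_def)
  qed
  have v: "\<forall>t. 0 < t \<and> t < R \<longrightarrow> laplacian f (t *\<^sub>R axis i0 1) = a2 t + (real CARD('n) - 1) * a t / t"
  proof (intro allI impI)
    fix t :: real assume t: "0 < t \<and> t < R"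
    have tb: "t *\<^sub>R e \<in> ball 0 R" using inb t by simp
    have pp: "partial j (partial j f) (t *\<^sub>R e) = (D2f (t *\<^sub>R e) *v axis j 1) $ j" for j
      by (rule partial2_eq[OF Df D2f tb])
    have other: "(D2f (t *\<^sub>R e) *v axis j 1) $ j = a t / t" if j: "j \<noteq> i0" for j
    proof -
      define g where "g = (\<lambda>s. Df (t *\<^sub>R e + s *\<^sub>R axis j 1) $ j)"
      have "(g has_real_derivative ((\<lambda>h. D2f (t *\<^sub>R e) *v h) (axis j 1)) $ j) (at 0)"
        unfolding g_def by (rule line_deriv_vec) (use D2f tb in simp)
      then have L1: "((\<lambda>s. (g s - g 0) / (s - 0)) \<longlongrightarrow> (D2f (t *\<^sub>R e) *v axis j 1) $ j) (at 0)"
        by (simp add: has_field_derivative_iff)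
      have ej: "e $ j = 0" using j by (simp add: e_def axis_def)
      have g0: "g 0 = 0" using Dfy[OF tb] t ej by (simp add: g_def)
      have comp: "(t *\<^sub>R e + s *\<^sub>R axis j 1) $ j = s" for s by (simp add: ej)
      have compi: "(t *\<^sub>R e + s *\<^sub>R axis j 1) $ i0 = t" for s using j by (simp add: e_def axis_def)
      have ev: "eventually (\<lambda>s. a (norm (t *\<^sub>R e + s *\<^sub>R axis j 1)) / norm (t *\<^sub>R e + s *\<^sub>R axis j 1)
                 = (g s - g 0) / (s - 0)) (at 0)"
        unfolding eventually_at
      proof (intro exI[of _ "R - t"] conjI ballI impI)
        show "R - t > 0" using t by simp
        fix s :: real assume s: "s \<noteq> 0 \<and> dist s 0 < R - t"
        have "norm (t *\<^sub>R e + s *\<^sub>R axis j 1) \<le> norm (t *\<^sub>R e) + norm (s *\<^sub>R axis j (1::real))"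
          using norm_triangle_ineq by blast
        also have "\<dots> = t + \<bar>s\<bar>" using t by (simp add: e_def)
        finally have nb: "t *\<^sub>R e + s *\<^sub>R axis j 1 \<in> ball 0 R" using s by simp
        have nz: "t *\<^sub>R e + s *\<^sub>R axis j 1 \<noteq> 0" proof assume "t *\<^sub>R e + s *\<^sub>R axis j 1 = 0" then have "(t *\<^sub>R e + s *\<^sub>R axis j 1) $ i0 = 0" by simp then show False using compi[of s] t by simp qed
        show "a (norm (t *\<^sub>R e + s *\<^sub>R axis j 1)) / norm (t *\<^sub>R e + s *\<^sub>R axis j 1) = (g s - g 0) / (s - 0)"
          proof - have gs: "g s = a (norm (t *\<^sub>R e + s *\<^sub>R axis j 1)) * s / norm (t *\<^sub>R e + s *\<^sub>R axis j 1)" using Dfy[OF nb nz, of j] unfolding g_def comp . show ?thesis using s by (simp add: gs g0) qed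
      qed
      have cont: "isCont a t" using iii t DERIV_isCont[of a "a2 t" t] by simp
      have nl: "((\<lambda>s. norm (t *\<^sub>R e + s *\<^sub>R axis j 1)) \<longlongrightarrow> t) (at 0)"
      proof -
        have "((\<lambda>s. norm (t *\<^sub>R e + s *\<^sub>R axis j 1)) \<longlongrightarrow> norm (t *\<^sub>R e + 0 *\<^sub>R axis j 1)) (at 0)"
          by (intro tendsto_intros)
        then show ?thesis using t by (simp add: e_def)
      qed
      have L2: "((\<lambda>s. a (norm (t *\<^sub>R e + s *\<^sub>R axis j 1)) / norm (t *\<^sub>R e + s *\<^sub>R axis j 1)) \<longlongrightarrow> a t / t) (at 0)"
        using t by (intro tendsto_divide isCont_tendsto_compose[OF cont] nl) auto
      have L3: "((\<lambda>s. (g s - g 0) / (s - 0)) \<longlongrightarrow> a t / t) (at 0)"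
        using tendsto_cong[OF ev] L2 by blast
      show ?thesis using tendsto_unique[OF _ L1 L3] by simp
    qed
    have "laplacian f (t *\<^sub>R e) = (\<Sum>j\<in>UNIV. (D2f (t *\<^sub>R e) *v axis j 1) $ j)"
      by (simp add: laplacian_def pp)
    also have "\<dots> = (D2f (t *\<^sub>R e) *v axis i0 1) $ i0 + (\<Sum>j\<in>UNIV-{i0}. (D2f (t *\<^sub>R e) *v axis j 1) $ j)"
      by (simp add: sum.remove)
    also have "\<dots> = a2 t + (\<Sum>j\<in>UNIV-{i0}. a t / t)"
      using other by (simp add: a2_def e_def)
    also have "\<dots> = a2 t + (real CARD('n) - 1) * a t / t"
      by (simp add: card_Diff_singleton of_nat_diff)
    finally show "laplacian f (t *\<^sub>R axis i0 1) = a2 t + (real CARD('n) - 1) * a t / t"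
      by (simp add: e_def)
  qed
  show ?thesis using i ii iii iv v by blast
qed


lemma cancel_aux: fixes a b n y :: real assumes "n \<noteq> 0" "b \<noteq> 0"
  shows "a / (n * b) * (b * y * (1 - 0)) = a * y / n"
  using assms by (simp add: field_simps)

lemma shrink: fixes a r d :: real assumes "a > 0" "d > 0" "r > 0"
  shows "a * (1 - r ^ m) / d \<le> a / d"
proof -
  have "r ^ m \<ge> 0" using assms by simp
  then have "a * (1 - r ^ m) \<le> a" using assms by (simp add: algebra_simps)
  then show ?thesis using assms by (intro divide_right_mono) auto
qed

lemma cont_of_deriv:
  fixes f :: "real \<Rightarrow> real"
  assumes "\<And>t. \<bar>t\<bar> < R \<Longrightarrow> (f has_real_derivative f' t) (at t)" "0 \<le> a" "b < R"
  shows "continuous_on {a..b} f"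
proof (rule continuous_at_imp_continuous_on, intro ballI)
  fix x assume "x \<in> {a..b}"
  then have "\<bar>x\<bar> < R" using assms by auto
  then show "isCont f x" using assms(1) DERIV_isCont by blast
qed

lemma incr_open:
  fixes f :: "real \<Rightarrow> real"
  assumes "a \<le> b" "continuous_on {a..b} f"
    "\<And>x. a < x \<Longrightarrow> x < b \<Longrightarrow> (f has_real_derivative f' x) (at x)"
    "\<And>x. a < x \<Longrightarrow> x < b \<Longrightarrow> f' x \<ge> 0"
  shows "f a \<le> f b"
proof (rule DERIV_nonneg_imp_increasing_open[OF assms(1) _ assms(2)])
  fix x assume x: "a < x" "x < b"
  show "\<exists>y. (f has_real_derivative y) (at x) \<and> 0 \<le> y"
    by (intro exI[of _ "f' x"] conjI assms(3) assms(4) x)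
qed

lemma strict_incr_open:
  fixes f :: "real \<Rightarrow> real"
  assumes "a < b" "continuous_on {a..b} f"
    "\<And>x. a < x \<Longrightarrow> x < b \<Longrightarrow> (f has_real_derivative f' x) (at x)"
    "\<And>x. a < x \<Longrightarrow> x < b \<Longrightarrow> f' x > 0"
  shows "f a < f b"
proof (rule DERIV_pos_imp_increasing_open[OF assms(1) _ assms(2)])
  fix x assume x: "a < x" "x < b"
  show "\<exists>y. (f has_real_derivative y) (at x) \<and> 0 < y"
    by (intro exI[of _ "f' x"] conjI assms(3) assms(4) x)
qed

locale odesys =
  fixes U A A2 V B B2 :: "real \<Rightarrow> real" and R p :: real and k :: nat
  assumes R: "R > 0" and p: "p > 0" and k: "k \<ge> 1"
    and dU: "\<And>t. \<bar>t\<bar> < R \<Longrightarrow> (U has_real_derivative A t) (at t)"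
    and dA: "\<And>t. \<bar>t\<bar> < R \<Longrightarrow> (A has_real_derivative A2 t) (at t)"
    and dV: "\<And>t. \<bar>t\<bar> < R \<Longrightarrow> (V has_real_derivative B t) (at t)"
    and dB: "\<And>t. \<bar>t\<bar> < R \<Longrightarrow> (B has_real_derivative B2 t) (at t)"
    and Vpos: "\<And>t. 0 \<le> t \<Longrightarrow> t < R \<Longrightarrow> V t > 0"
    and eqA: "\<And>t. 0 < t \<Longrightarrow> t < R \<Longrightarrow> A2 t + real k * A t / t = V t powr p"
    and eqB: "\<And>t. 0 < t \<Longrightarrow> t < R \<Longrightarrow> B2 t + real k * B t / t = exp \<bar>A t\<bar>"
begin

lemma key_pos:
  fixes F F2 G :: "real \<Rightarrow> real"
  assumes dF: "\<And>t. \<bar>t\<bar> < R \<Longrightarrow> (F has_real_derivative F2 t) (at t)"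
    and eq: "\<And>t. 0 < t \<Longrightarrow> t < R \<Longrightarrow> F2 t + real k * F t / t = G t"
    and Gpos: "\<And>t. 0 < t \<Longrightarrow> t < R \<Longrightarrow> G t > 0"
    and t: "0 < t" "t < R"
  shows "F t > 0"
proof -
  obtain m where km: "k = Suc m" using k by (cases k) auto
  let ?h = "\<lambda>s. s ^ k * F s"
  have c: "continuous_on {0..t} ?h"
    by (intro continuous_intros cont_of_deriv[OF dF]) (use t in auto)
  have "?h 0 < ?h t"
  proof (rule strict_incr_open[OF t(1) c])
    fix s assume s: "0 < s" "s < t"
    show "(?h has_real_derivative (real k * s ^ (k - Suc 0) * F s + s ^ k * F2 s)) (at s)"
      using DERIV_mult[OF DERIV_pow[of k s] dF[of s]] s t by (simp add: mult.commute)
    have "real k * s ^ (k - Suc 0) * F s + s ^ k * F2 s = s ^ k * (F2 s + real k * F s / s)"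
      using s km by (simp add: field_simps)
    also have "\<dots> = s ^ k * G s" using eq[of s] s t by simp
    finally show "real k * s ^ (k - Suc 0) * F s + s ^ k * F2 s > 0"
      using Gpos[of s] s t by simp
  qed
  then have "0 < t ^ k * F t" using km by simp
  moreover have "t ^ k > 0" using t by simp
  ultimately show ?thesis by (metis zero_less_mult_pos)
qed

lemma A_pos: "0 < t \<Longrightarrow> t < R \<Longrightarrow> A t > 0"
proof (rule key_pos[OF dA eqA])
  fix s assume "0 < s" "s < R"
  then have "V s > 0" using Vpos by simp
  then show "V s powr p > 0" by simp
qed

lemma B_pos: "0 < t \<Longrightarrow> t < R \<Longrightarrow> B t > 0"
  by (rule key_pos[OF dB eqB]) auto

lemma V_mono: "0 \<le> s \<Longrightarrow> s \<le> t \<Longrightarrow> t < R \<Longrightarrow> V s \<le> V t"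
proof (rule incr_open[OF _ cont_of_deriv[OF dV]])
  fix x assume "s < x" "x < t" "0 \<le> s" "t < R"
  then show "(V has_real_derivative B x) (at x)" "B x \<ge> 0"
    using dV[of x] B_pos[of x] by auto
qed


lemma key_upper:
  fixes F F2 G :: "real \<Rightarrow> real"
  assumes dF: "\<And>t. \<bar>t\<bar> < R \<Longrightarrow> (F has_real_derivative F2 t) (at t)"
    and eq: "\<And>t. 0 < t \<Longrightarrow> t < R \<Longrightarrow> F2 t + real k * F t / t = G t"
    and Gmono: "\<And>s t. 0 < s \<Longrightarrow> s \<le> t \<Longrightarrow> t < R \<Longrightarrow> G s \<le> G t"
    and t: "0 < t" "t < R"
  shows "F t \<le> t * G t / (real k + 1)" "F2 t \<ge> G t / (real k + 1)"
proof -
  obtain m where km: "k = Suc m" using k by (cases k) auto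
  let ?h = "\<lambda>s. s ^ k * F s - (G t / (real k + 1)) * s ^ Suc k"
  have cF: "continuous_on {0..t} F" by (rule cont_of_deriv[OF dF]) (use t in auto)
  have c: "continuous_on {0..t} ?h"
    by (intro continuous_on_diff continuous_on_mult continuous_on_power continuous_on_id continuous_on_const cF)
  have "?h t \<le> ?h 0"
  proof (rule DERIV_nonpos_imp_decreasing_open[OF less_imp_le[OF t(1)] _ c], rule exI, rule conjI)
    fix s assume s: "0 < s" "s < t"
    show "(?h has_real_derivative (real k * s ^ (k - Suc 0) * F s + s ^ k * F2 s
        - (G t / (real k + 1)) * (real (Suc k) * s ^ (Suc k - Suc 0)))) (at s)"
      using DERIV_diff[OF DERIV_mult[OF DERIV_pow[of k s] dF[of s]]
          DERIV_cmult[OF DERIV_pow[of "Suc k" s], of "G t / (real k + 1)"]] s t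
      by (simp add: mult.commute)
    have "real k * s ^ (k - Suc 0) * F s + s ^ k * F2 s = s ^ k * (F2 s + real k * F s / s)"
      using s km by (simp add: field_simps)
    also have "\<dots> = s ^ k * G s" using eq[of s] s t by simp
    finally have 1: "real k * s ^ (k - Suc 0) * F s + s ^ k * F2 s = s ^ k * G s" .
    have 2: "(G t / (real k + 1)) * (real (Suc k) * s ^ (Suc k - Suc 0)) = s ^ k * G t"
      by (simp add: field_simps)
    have "s ^ k * G s \<le> s ^ k * G t" using Gmono[of s t] s t by (intro mult_left_mono) auto
    then show "real k * s ^ (k - Suc 0) * F s + s ^ k * F2 s
        - (G t / (real k + 1)) * (real (Suc k) * s ^ (Suc k - Suc 0)) \<le> 0"
      unfolding 1 2 by simp
  qed
  then have "t ^ k * F t \<le> (G t / (real k + 1)) * t ^ Suc k" using km by simp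
  also have "(G t / (real k + 1)) * t ^ Suc k = t ^ k * (t * G t / (real k + 1))"
    by (simp add: mult_ac)
  finally have "t ^ k * F t \<le> t ^ k * (t * G t / (real k + 1))" .
  moreover have "t ^ k > 0" using t by simp
  ultimately show u: "F t \<le> t * G t / (real k + 1)" by (meson mult_le_cancel_left_pos)
  have "F t / t \<le> (t * G t / (real k + 1)) / t" using u t by (intro divide_right_mono) auto
  also have "\<dots> = G t / (real k + 1)" using t by simp
  finally have "real k * (F t / t) \<le> real k * (G t / (real k + 1))" by (intro mult_left_mono) auto
  moreover have "G t - real k * (G t / (real k + 1)) = G t / (real k + 1)"
    by (simp add: field_simps)
  moreover have "F2 t = G t - real k * (F t / t)" using eq[OF t] by simp
  ultimately show "F2 t \<ge> G t / (real k + 1)" by linarith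
qed

lemma Vp_mono: "0 < s \<Longrightarrow> s \<le> t \<Longrightarrow> t < R \<Longrightarrow> V s powr p \<le> V t powr p"
  using V_mono[of s t] Vpos[of s] p by (intro powr_mono2) auto

lemma A_bounds: "0 < t \<Longrightarrow> t < R \<Longrightarrow> A t \<le> t * V t powr p / (real k + 1) \<and> A2 t \<ge> V t powr p / (real k + 1)"
  using key_upper[OF dA eqA Vp_mono] by blast

lemma A2_pos: "0 < t \<Longrightarrow> t < R \<Longrightarrow> A2 t > 0"
proof -
  assume t: "0 < t" "t < R"
  have "V t > 0" using Vpos t by simp
  then have "V t powr p / (real k + 1) > 0" by simp
  then show ?thesis using A_bounds[OF t] by linarith
qed

lemma A_mono: "0 < s \<Longrightarrow> s \<le> t \<Longrightarrow> t < R \<Longrightarrow> A s \<le> A t"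
proof (rule incr_open[OF _ cont_of_deriv[OF dA]])
  fix x assume "s < x" "x < t" "0 < s" "t < R"
  then show "(A has_real_derivative A2 x) (at x)" "A2 x \<ge> 0"
    using dA[of x] A2_pos[of x] by auto
qed auto

lemma expA_mono: "0 < s \<Longrightarrow> s \<le> t \<Longrightarrow> t < R \<Longrightarrow> exp \<bar>A s\<bar> \<le> exp \<bar>A t\<bar>"
  using A_mono[of s t] A_pos[of s] A_pos[of t] by simp

lemma B2_lower: "0 < t \<Longrightarrow> t < R \<Longrightarrow> B2 t \<ge> exp (A t) / (real k + 1)"
proof -
  assume t: "0 < t" "t < R"
  have "B2 t \<ge> exp \<bar>A t\<bar> / (real k + 1)" by (rule key_upper(2)[OF dB eqB expA_mono t])
  moreover have "\<bar>A t\<bar> = A t" using A_pos[OF t] by simp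
  ultimately show ?thesis by simp
qed


lemma B_lin:
  assumes t0: "0 < t0" and s: "0 \<le> s" "t0 + s < R"
  shows "B (t0 + s) \<ge> exp (A t0) / (real k + 1) * s"
proof -
  define c where "c = exp (A t0) / (real k + 1)"
  let ?h = "\<lambda>x. B x - c * (x - t0)"
  have cB: "continuous_on {t0..t0+s} B" by (rule cont_of_deriv[OF dB]) (use t0 s in auto)
  have ch: "continuous_on {t0..t0+s} ?h"
    by (intro continuous_on_diff continuous_on_mult continuous_on_id continuous_on_const cB)
  have "?h t0 \<le> ?h (t0 + s)"
  proof (rule incr_open[OF _ ch])
    show "t0 \<le> t0 + s" using s by simp
    fix x assume x: "t0 < x" "x < t0 + s"
    show "(?h has_real_derivative (B2 x - c * (1 - 0))) (at x)"
      by (intro DERIV_diff DERIV_cmult DERIV_ident DERIV_const dB) (use x t0 s in auto)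
    have "B2 x \<ge> exp (A x) / (real k + 1)" using B2_lower[of x] x t0 s by simp
    moreover have "exp (A t0) \<le> exp (A x)" using A_mono[of t0 x] x t0 s by simp
    ultimately have "B2 x \<ge> c" unfolding c_def
      by (meson divide_right_mono of_nat_0_le_iff add_nonneg_nonneg zero_le_one order_trans)
    then show "B2 x - c * (1 - 0) \<ge> 0" by simp
  qed
  moreover have "B t0 > 0" using B_pos[of t0] t0 s by simp
  ultimately show ?thesis unfolding c_def by simp
qed

lemma V_quad:
  assumes t0: "0 < t0" and s: "0 \<le> s" "t0 + s < R"
  shows "V (t0 + s) \<ge> exp (A t0) / (real k + 1) / 2 * s\<^sup>2"
proof -
  define c where "c = exp (A t0) / (real k + 1)"
  let ?h = "\<lambda>x. V x - c / 2 * ((x - t0) * (x - t0))"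
  have cV: "continuous_on {t0..t0+s} V" by (rule cont_of_deriv[OF dV]) (use t0 s in auto)
  have ch: "continuous_on {t0..t0+s} ?h"
    by (intro continuous_on_diff continuous_on_mult continuous_on_id continuous_on_const cV)
  have "?h t0 \<le> ?h (t0 + s)"
  proof (rule incr_open[OF _ ch])
    show "t0 \<le> t0 + s" using s by simp
    fix x assume x: "t0 < x" "x < t0 + s"
    show "(?h has_real_derivative (B x - c / 2 * ((1 - 0) * (x - t0) + (1 - 0) * (x - t0)))) (at x)"
    proof -
      have dq: "((\<lambda>x. (x - t0) * (x - t0)) has_real_derivative ((1 - 0) * (x - t0) + (1 - 0) * (x - t0))) (at x)"
        by (rule DERIV_mult[OF DERIV_diff[OF DERIV_ident DERIV_const] DERIV_diff[OF DERIV_ident DERIV_const]])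
      have "\<bar>x\<bar> < R" using x t0 s by auto
      from DERIV_diff[OF dV[OF this] DERIV_cmult[OF dq, of "c / 2"]] show ?thesis .
    qed
    have "B x \<ge> c * (x - t0)" using B_lin[of t0 "x - t0"] x t0 s unfolding c_def by simp
    moreover have "c / 2 * ((1 - 0) * (x - t0) + (1 - 0) * (x - t0)) = c * (x - t0)"
      by (simp add: algebra_simps)
    ultimately show "B x - c / 2 * ((1 - 0) * (x - t0) + (1 - 0) * (x - t0)) \<ge> 0" by linarith
  qed
  moreover have "V t0 > 0" using Vpos[of t0] t0 s by simp
  ultimately show ?thesis unfolding c_def by (simp add: power2_eq_square)
qed

definition Kc :: real where "Kc = (1 / (2 * (real k + 1))) powr p / ((real k + 1) * (2 * p + 1))"

lemma Kc_pos: "Kc > 0"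
  unfolding Kc_def using p by (intro divide_pos_pos mult_pos_pos) auto

lemma stage:
  assumes t0: "0 < t0" and T: "0 < T" "t0 + T < R"
  shows "A (t0 + T) \<ge> A t0 + Kc * exp (p * A t0) * T powr (2 * p + 1)"
proof -
  define c where "c = exp (A t0) / (real k + 1)"
  define K where "K = (c / 2) powr p / ((real k + 1) * (2 * p + 1))"
  let ?h = "\<lambda>x. A x - K * (x - t0) powr (2 * p + 1)"
  have cA: "continuous_on {t0..t0+T} A" by (rule cont_of_deriv[OF dA]) (use t0 T in auto)
  have cp: "continuous_on {t0..t0+T} (\<lambda>x. (x - t0) powr (2 * p + 1))"
    by (rule continuous_on_powr') (use p in \<open>auto intro!: continuous_intros\<close>)
  have ch: "continuous_on {t0..t0+T} ?h"
    by (intro continuous_on_diff continuous_on_mult continuous_on_const cA cp)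
  have "?h t0 \<le> ?h (t0 + T)"
  proof (rule incr_open[OF _ ch])
    show "t0 \<le> t0 + T" using T by simp
    fix x assume x: "t0 < x" "x < t0 + T"
    have dp: "((\<lambda>x. (x - t0) powr (2 * p + 1)) has_real_derivative
        ((2 * p + 1) * (x - t0) powr (2 * p + 1 - 1) * (1 - 0))) (at x)"
      by (rule has_real_derivative_powr[THEN DERIV_chain2]) (use x in \<open>auto intro!: derivative_eq_intros\<close>)
    show "(?h has_real_derivative (A2 x - K * ((2 * p + 1) * (x - t0) powr (2 * p + 1 - 1) * (1 - 0)))) (at x)"
      by (intro DERIV_diff DERIV_cmult dp dA) (use x t0 T in auto)
    have xl: "\<bar>x\<bar> < R" "0 < x" "x < R" using x t0 T by auto
    have "A2 x \<ge> V x powr p / (real k + 1)" using A_bounds[of x] xl by simp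
    moreover have "V x powr p \<ge> (c / 2 * (x - t0)\<^sup>2) powr p"
      using V_quad[of t0 "x - t0"] x t0 T p unfolding c_def
      by (intro powr_mono2) (auto simp: c_def)
    moreover have "(c / 2 * (x - t0)\<^sup>2) powr p = (c / 2) powr p * (x - t0) powr (2 * p)"
    proof -
      have "(x - t0)\<^sup>2 = (x - t0) powr 2" using x by (simp add: powr_realpow)
      then have "((x - t0)\<^sup>2) powr p = (x - t0) powr (2 * p)" by (simp add: powr_powr)
      moreover have "c / 2 \<ge> 0" unfolding c_def by simp
      then have "(c / 2 * (x - t0)\<^sup>2) powr p = (c / 2) powr p * ((x - t0)\<^sup>2) powr p"
        using powr_mult zero_le_power2 by blast
      ultimately show ?thesis by simp
    qed
    ultimately have "A2 x \<ge> (c / 2) powr p * (x - t0) powr (2 * p) / (real k + 1)"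
      by (smt (verit) divide_right_mono of_nat_0_le_iff)
    moreover have "K * ((2 * p + 1) * (x - t0) powr (2 * p + 1 - 1) * (1 - 0))
        = (c / 2) powr p * (x - t0) powr (2 * p) / (real k + 1)"
    proof -
      have e: "2 * p + 1 - 1 = 2 * p" by simp
      have p1: "2 * p + 1 > 0" "real k + 1 > 0" using p by auto
      show ?thesis unfolding K_def e by (rule cancel_aux) (use p1 in auto)
    qed
    ultimately show "A2 x - K * ((2 * p + 1) * (x - t0) powr (2 * p + 1 - 1) * (1 - 0)) \<ge> 0"
      by simp
  qed
  then have "A (t0 + T) \<ge> A t0 + K * T powr (2 * p + 1)" using p by simp
  moreover have "K = Kc * exp (p * A t0)"
  proof -
    have "c / 2 = exp (A t0) * (1 / (2 * (real k + 1)))" unfolding c_def by simp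
    then have "(c / 2) powr p = exp (A t0) powr p * (1 / (2 * (real k + 1))) powr p"
      by (simp only: powr_mult)
    then have "(c / 2) powr p = exp (A t0 * p) * (1 / (2 * (real k + 1))) powr p"
      by (simp only: exp_powr_real)
    then show ?thesis unfolding K_def Kc_def by (simp add: mult_ac)
  qed
  ultimately show ?thesis by (simp add: mult_ac)
qed


definition q :: real where "q = p / (2 * p + 1)"
definition L :: real where "L = (1 / Kc) powr (1 / (2 * p + 1))"
definition Tf :: "real \<Rightarrow> real" where "Tf y = L * exp (- q * y)"
definition \<rho> :: real where "\<rho> = exp (- q)"

lemma q_pos: "q > 0" unfolding q_def using p by simp
lemma L_pos: "L > 0" unfolding L_def using Kc_pos by simp
lemma Tf_pos: "Tf y > 0" unfolding Tf_def using L_pos by simp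
lemma rho: "0 < \<rho>" "\<rho> < 1" unfolding \<rho>_def using q_pos by auto

lemma Tf_shift: "Tf (y + real m) = Tf y * \<rho> ^ m"
proof -
  have "exp (- q * (y + real m)) = exp (- q * y) * exp (real m * (- q))"
    by (simp add: exp_add[symmetric] algebra_simps)
  moreover have "exp (real m * (- q)) = exp (- q) ^ m" by (rule exp_of_nat_mult)
  ultimately show ?thesis unfolding Tf_def \<rho>_def by simp
qed

lemma Tf_anti: "y \<le> z \<Longrightarrow> Tf z \<le> Tf y"
proof -
  assume yz: "y \<le> z"
  have "- q * z \<le> - q * y" using q_pos yz by simp
  then have "exp (- q * z) \<le> exp (- q * y)" by simp
  then show ?thesis unfolding Tf_def using L_pos by (intro mult_left_mono) auto
qed

lemma stage1:
  assumes t0: "0 < t0" and T: "t0 + Tf (A t0) < R"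
  shows "A (t0 + Tf (A t0)) \<ge> A t0 + 1"
proof -
  have st: "A (t0 + Tf (A t0)) \<ge> A t0 + Kc * exp (p * A t0) * Tf (A t0) powr (2 * p + 1)"
    by (rule stage[OF t0 Tf_pos T])
  have p1: "2 * p + 1 > 0" using p by simp
  have "L powr (2 * p + 1) = 1 / Kc"
    unfolding L_def using p1 Kc_pos by (simp add: powr_powr)
  moreover have "exp (- q * A t0) powr (2 * p + 1) = exp (- p * A t0)"
    unfolding exp_powr_real q_def using p1 by (simp add: field_simps)
  ultimately have "Tf (A t0) powr (2 * p + 1) = 1 / Kc * exp (- p * A t0)"
    unfolding Tf_def by (simp add: powr_mult)
  then have "Kc * exp (p * A t0) * Tf (A t0) powr (2 * p + 1) = exp (p * A t0) * exp (- p * A t0)"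
    using Kc_pos by simp
  also have "\<dots> = 1" by (simp add: exp_add[symmetric])
  finally show ?thesis using st by simp
qed

lemma blowup:
  assumes t0: "0 < t0" "t0 < R"
  shows "R - t0 \<le> Tf (A t0) / (1 - \<rho>)"
proof (rule ccontr)
  assume H: "\<not> R - t0 \<le> Tf (A t0) / (1 - \<rho>)"
  define ts where "ts = t0 + Tf (A t0) / (1 - \<rho>)"
  have ts: "ts < R" using H unfolding ts_def by simp
  have r1: "1 - \<rho> > 0" using rho by simp
  have claim: "\<exists>t. t0 \<le> t \<and> t \<le> t0 + Tf (A t0) * (1 - \<rho> ^ m) / (1 - \<rho>) \<and> A t \<ge> A t0 + real m" for m
  proof (induction m)
    case 0
    show ?case by (intro exI[of _ t0]) simp
  next
    case (Suc m)
    then obtain t where t: "t0 \<le> t" "t \<le> t0 + Tf (A t0) * (1 - \<rho> ^ m) / (1 - \<rho>)" "A t \<ge> A t0 + real m"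
      by blast
    have Tle: "Tf (A t) \<le> Tf (A t0) * \<rho> ^ m"
      using Tf_anti[OF t(3)] Tf_shift[of "A t0" m] by simp
    have alg: "Tf (A t0) * (1 - \<rho> ^ m) / (1 - \<rho>) + Tf (A t0) * \<rho> ^ m
        = Tf (A t0) * (1 - \<rho> ^ Suc m) / (1 - \<rho>)"
      using r1 by (simp add: field_simps)
    have t1: "t + Tf (A t) \<le> t0 + Tf (A t0) * (1 - \<rho> ^ Suc m) / (1 - \<rho>)"
      using t(2) Tle alg by linarith
    have "Tf (A t0) * (1 - \<rho> ^ Suc m) / (1 - \<rho>) \<le> Tf (A t0) / (1 - \<rho>)"
      by (rule shrink[OF Tf_pos r1 rho(1)])
    then have "t + Tf (A t) < R" using t1 ts unfolding ts_def by linarith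
    then have "A (t + Tf (A t)) \<ge> A t + 1" using t(1) t0 by (intro stage1) auto
    then show ?case using t(1) t1 Tf_pos[of "A t"] t(3)
      by (intro exI[of _ "t + Tf (A t)"]) auto
  qed
  define m where "m = nat \<lceil>A ts - A t0\<rceil> + 1"
  obtain t where t: "t0 \<le> t" "t \<le> t0 + Tf (A t0) * (1 - \<rho> ^ m) / (1 - \<rho>)" "A t \<ge> A t0 + real m"
    using claim by blast
  have "Tf (A t0) * (1 - \<rho> ^ m) / (1 - \<rho>) \<le> Tf (A t0) / (1 - \<rho>)"
    by (rule shrink[OF Tf_pos r1 rho(1)])
  then have "t \<le> ts" using t(2) unfolding ts_def by linarith
  then have "A t \<le> A ts" using t(1) t0 ts by (intro A_mono) auto
  moreover have "real m > A ts - A t0" unfolding m_def by linarith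
  ultimately show False using t(3) by linarith
qed

definition C0 :: real where "C0 = L / (1 - \<rho>)"
definition K2 :: real where "K2 = 2 * sqrt C0 / q"

lemma C0_pos: "C0 > 0" unfolding C0_def using L_pos rho by simp

lemma A_sqrt_bound:
  assumes t: "0 < t" "t < R"
  shows "A t \<le> K2 / sqrt (R - t)"
proof -
  define E where "E = exp (q * A t)"
  have Epos: "E > 0" unfolding E_def by simp
  have Rt: "R - t > 0" using t by simp
  have "Tf (A t) / (1 - \<rho>) = C0 * exp (- (q * A t))"
    unfolding Tf_def C0_def by (simp only: times_divide_eq_left mult_minus_left)
  also have "exp (- (q * A t)) = inverse E" unfolding E_def by (rule exp_minus)
  finally have "R - t \<le> C0 * inverse E" using blowup[OF t] by simp
  then have "(R - t) * E \<le> C0 * inverse E * E" using Epos by (intro mult_right_mono) auto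
  also have "C0 * inverse E * E = C0" using Epos by simp
  finally have "(R - t) * E \<le> C0" .
  then have e: "E \<le> C0 / (R - t)" using Rt by (simp add: pos_le_divide_eq mult.commute)
  define y where "y = q * A t / 2"
  have y0: "y \<ge> 0" unfolding y_def using q_pos A_pos[OF t] by simp
  have "y \<le> exp y" using exp_ge_add_one_self[of y] by linarith
  then have "y\<^sup>2 \<le> (exp y)\<^sup>2" using y0 by (intro power_mono) auto
  also have "(exp y)\<^sup>2 = exp (y + y)" by (simp only: power2_eq_square exp_add)
  also have "y + y = q * A t" unfolding y_def by simp
  finally have "y\<^sup>2 \<le> C0 / (R - t)" using e unfolding E_def by linarith
  then have "y \<le> sqrt (C0 / (R - t))" by (rule real_le_rsqrt)
  then have yb: "y \<le> sqrt C0 / sqrt (R - t)" by (simp only: real_sqrt_divide)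
  have "A t = 2 * y / q" unfolding y_def using q_pos by simp
  also have "\<dots> \<le> 2 * (sqrt C0 / sqrt (R - t)) / q"
    using yb q_pos by (intro divide_right_mono mult_left_mono) auto
  also have "\<dots> = K2 / sqrt (R - t)" unfolding K2_def by simp
  finally show ?thesis .
qed

lemma U_bound: "0 \<le> t \<Longrightarrow> t < R \<Longrightarrow> U t \<le> U 0 + 2 * K2 * sqrt R"
proof -
  assume t: "0 \<le> t" "t < R"
  have K2: "K2 \<ge> 0" unfolding K2_def using C0_pos q_pos by simp
  let ?h = "\<lambda>s. U s + 2 * K2 * sqrt (R - s)"
  have cU: "continuous_on {0..t} U" by (rule cont_of_deriv[OF dU]) (use t in auto)
  have cs: "continuous_on {0..t} (\<lambda>s. sqrt (R - s))"
    by (rule continuous_on_real_sqrt[OF continuous_on_diff[OF continuous_on_const continuous_on_id]])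
  have ch: "continuous_on {0..t} ?h"
    by (rule continuous_on_add[OF cU continuous_on_mult[OF continuous_on_const cs]])
  have "?h t \<le> ?h 0"
  proof (rule DERIV_nonpos_imp_decreasing_open[OF t(1) _ ch], rule exI, rule conjI)
    fix s assume s: "0 < s" "s < t"
    have sR: "R - s > 0" using s t by simp
    have ds: "((\<lambda>s. sqrt (R - s)) has_real_derivative (inverse (sqrt (R - s)) / 2 * (0 - 1))) (at s)"
      using DERIV_chain2[OF DERIV_real_sqrt[OF sR] DERIV_diff[OF DERIV_const DERIV_ident]] .
    show "(?h has_real_derivative (A s + 2 * K2 * (inverse (sqrt (R - s)) / 2 * (0 - 1)))) (at s)"
    proof -
      have "\<bar>s\<bar> < R" using s t by auto
      from DERIV_add[OF dU[OF this] DERIV_cmult[OF ds, of "2 * K2"]] show ?thesis .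
    qed
    have "A s \<le> K2 / sqrt (R - s)" using A_sqrt_bound[of s] s t by simp
    moreover have "2 * K2 * (inverse (sqrt (R - s)) / 2 * (0 - 1)) = - (K2 / sqrt (R - s))"
      using sR by (simp add: field_simps)
    ultimately show "A s + 2 * K2 * (inverse (sqrt (R - s)) / 2 * (0 - 1)) \<le> 0"
      by linarith
  qed
  then have "U t + 2 * K2 * sqrt (R - t) \<le> U 0 + 2 * K2 * sqrt (R - 0)" by (simp only:)
  moreover have "2 * K2 * sqrt (R - t) \<ge> 0" using K2 t by simp
  ultimately show ?thesis by simp
qed

end


theorem corollary2p2:
  fixes u v :: "real^'n \<Rightarrow> real" and R p :: real
  assumes "CARD('n) \<ge> 2" and "R > 0" and "p > 0"
    and "C2_on (ball 0 R) u" and "C2_on (ball 0 R) v"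
    and "radial_on (ball 0 R) u" and "radial_on (ball 0 R) v"
    and "\<forall>x\<in>ball 0 R. u x > 0" and "\<forall>x\<in>ball 0 R. v x > 0"
    and "\<forall>x\<in>ball 0 R. laplacian u x = v x powr p"
    and "\<forall>x\<in>ball 0 R. laplacian v x = exp (norm (grad u x))"
  shows "(bounded (u ` ball 0 R) \<and> bounded (v ` ball 0 R)) \<or>
         (bounded (u ` ball 0 R) \<and>
          (\<forall>M. \<exists>\<delta>>0. \<forall>x\<in>ball 0 R. norm x > R - \<delta> \<longrightarrow> v x > M))"
proof -
  note card = assms(1) and R = assms(2) and p = assms(3)
  define i0 :: 'n where "i0 = undefined"
  define e :: "real^'n" where "e = axis i0 1"
  obtain \<phi>u au au2 where
      Fu1: "\<forall>x\<in>ball 0 R. u x = \<phi>u (norm x)"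
    and Fu2: "\<forall>t. \<bar>t\<bar> < R \<longrightarrow> (\<phi>u has_real_derivative au t) (at t)"
    and Fu3: "\<forall>t. \<bar>t\<bar> < R \<longrightarrow> (au has_real_derivative au2 t) (at t)"
    and Fu4: "\<forall>t. 0 < t \<and> t < R \<longrightarrow> laplacian u (t *\<^sub>R axis i0 1) = au2 t + (real CARD('n) - 1) * au t / t"
    and Fu5: "\<forall>t. 0 < t \<and> t < R \<longrightarrow> norm (grad u (t *\<^sub>R axis i0 1)) = \<bar>au t\<bar>"
    using radial_facts[OF R assms(4) assms(6), of i0] by blast
  obtain \<phi>v av av2 where
      Fv1: "\<forall>x\<in>ball 0 R. v x = \<phi>v (norm x)"
    and Fv2: "\<forall>t. \<bar>t\<bar> < R \<longrightarrow> (\<phi>v has_real_derivative av t) (at t)"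
    and Fv3: "\<forall>t. \<bar>t\<bar> < R \<longrightarrow> (av has_real_derivative av2 t) (at t)"
    and Fv4: "\<forall>t. 0 < t \<and> t < R \<longrightarrow> laplacian v (t *\<^sub>R axis i0 1) = av2 t + (real CARD('n) - 1) * av t / t"
    using radial_facts[OF R assms(5) assms(7), of i0] by blast
  define k where "k = CARD('n) - 1"
  have k1: "k \<ge> 1" unfolding k_def using card by simp
  have rk: "real k = real CARD('n) - 1" unfolding k_def using card by (simp add: of_nat_diff)
  have nte: "norm (t *\<^sub>R axis i0 (1::real)) = \<bar>t\<bar>" for t :: real by simp
  have teb: "\<bar>t\<bar> < R \<Longrightarrow> t *\<^sub>R axis i0 (1::real) \<in> ball 0 R" for t :: real by simp
  have Vpos: "\<phi>v t > 0" if "0 \<le> t" "t < R" for t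
  proof -
    have tb: "t *\<^sub>R axis i0 (1::real) \<in> ball 0 R" using teb that by simp
    have "v (t *\<^sub>R axis i0 1) > 0" using assms(9) tb by blast
    moreover have "v (t *\<^sub>R axis i0 1) = \<phi>v (norm (t *\<^sub>R axis i0 (1::real)))" using Fv1 tb by blast
    moreover have "norm (t *\<^sub>R axis i0 (1::real)) = t" using that by simp
    ultimately show ?thesis by simp
  qed
  have O: "odesys \<phi>u au au2 \<phi>v av av2 R p k"
  proof
    show "R > 0" "p > 0" "k \<ge> 1" using R p k1 by auto
    show "\<And>t. \<bar>t\<bar> < R \<Longrightarrow> (\<phi>u has_real_derivative au t) (at t)" using Fu2 by blast
    show "\<And>t. \<bar>t\<bar> < R \<Longrightarrow> (au has_real_derivative au2 t) (at t)" using Fu3 by blast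
    show "\<And>t. \<bar>t\<bar> < R \<Longrightarrow> (\<phi>v has_real_derivative av t) (at t)" using Fv2 by blast
    show "\<And>t. \<bar>t\<bar> < R \<Longrightarrow> (av has_real_derivative av2 t) (at t)" using Fv3 by blast
    show "\<And>t. 0 \<le> t \<Longrightarrow> t < R \<Longrightarrow> \<phi>v t > 0" using Vpos by blast
  next
    fix t :: real assume t: "0 < t" "t < R"
    have tb: "t *\<^sub>R axis i0 (1::real) \<in> ball 0 R" using teb t by simp
    have "laplacian u (t *\<^sub>R axis i0 1) = v (t *\<^sub>R axis i0 1) powr p" using assms(10) tb by blast
    also have "v (t *\<^sub>R axis i0 1) = \<phi>v t" using Fv1 tb t by simp
    finally show "au2 t + real k * au t / t = \<phi>v t powr p" using Fu4 t rk by simp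
  next
    fix t :: real assume t: "0 < t" "t < R"
    have tb: "t *\<^sub>R axis i0 (1::real) \<in> ball 0 R" using teb t by simp
    have "laplacian v (t *\<^sub>R axis i0 1) = exp (norm (grad u (t *\<^sub>R axis i0 1)))" using assms(11) tb by blast
    also have "norm (grad u (t *\<^sub>R axis i0 1)) = \<bar>au t\<bar>" using Fu5 t by simp
    finally show "av2 t + real k * av t / t = exp \<bar>au t\<bar>" using Fv4 t rk by simp
  qed
  have ub: "bounded (u ` ball 0 R)"
  proof -
    obtain Mu where Mu: "\<And>t. 0 \<le> t \<Longrightarrow> t < R \<Longrightarrow> \<phi>u t \<le> Mu"
      using odesys.U_bound[OF O] by blast
    have "\<forall>y\<in>u ` ball 0 R. norm y \<le> Mu"
    proof
      fix y assume "y \<in> u ` ball 0 R"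
      then obtain x where x: "x \<in> ball 0 R" "y = u x" by blast
      have "u x = \<phi>u (norm x)" using Fu1 x by blast
      moreover have "\<phi>u (norm x) \<le> Mu"
        using Mu[of "norm x"] x by simp
      moreover have "u x > 0" using assms(8) x by blast
      ultimately show "norm y \<le> Mu" using x by simp
    qed
    then show ?thesis unfolding bounded_iff by blast
  qed
  show ?thesis
  proof (cases "\<exists>M. \<forall>t. 0 \<le> t \<and> t < R \<longrightarrow> \<phi>v t \<le> M")
    case True
    then obtain M where M: "\<And>t. 0 \<le> t \<Longrightarrow> t < R \<Longrightarrow> \<phi>v t \<le> M" by blast
    have "\<forall>y\<in>v ` ball 0 R. norm y \<le> M"
    proof
      fix y assume "y \<in> v ` ball 0 R"
      then obtain x where x: "x \<in> ball 0 R" "y = v x" by blast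
      have "v x = \<phi>v (norm x)" using Fv1 x by blast
      moreover have "\<phi>v (norm x) \<le> M" using M[of "norm x"] x by simp
      moreover have "v x > 0" using assms(9) x by blast
      ultimately show "norm y \<le> M" using x by simp
    qed
    then have "bounded (v ` ball 0 R)" unfolding bounded_iff by blast
    then show ?thesis using ub by blast
  next
    case False
    have "\<forall>M. \<exists>\<delta>>0. \<forall>x\<in>ball 0 R. norm x > R - \<delta> \<longrightarrow> v x > M"
    proof
      fix M
      have "\<not> (\<forall>t. 0 \<le> t \<and> t < R \<longrightarrow> \<phi>v t \<le> M)" using False by blast
      then obtain t where t: "0 \<le> t" "t < R" "\<phi>v t > M" by (auto simp: not_le)
      show "\<exists>\<delta>>0. \<forall>x\<in>ball 0 R. norm x > R - \<delta> \<longrightarrow> v x > M"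
      proof (intro exI[of _ "R - t"] conjI ballI impI)
        show "R - t > 0" using t by simp
        fix x :: "real^'n" assume x: "x \<in> ball 0 R" "norm x > R - (R - t)"
        have "\<phi>v t \<le> \<phi>v (norm x)" using odesys.V_mono[OF O, of t "norm x"] t x by simp
        moreover have "v x = \<phi>v (norm x)" using Fv1 x by blast
        ultimately show "v x > M" using t by simp
      qed
    qed
    then show ?thesis using ub by blast
  qed
qed

end
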